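(* Let $k\ge2$, let $U\subseteq\mathbb{R}^d$ be a set of $k$ distinct points, and let $V\subseteq U$ with $|V|\ge2$. Then $L_2'(V)\ge L_2(V)/2$.
   Context: For $V$: for each dimension $i$ let $\mathcal{I}_i$ be the consecutive intervals $[a,b]$ ($a<b$) into which $[\min_{v\in V}v_i,\max_{v\in V}v_i]$ is partitioned by the projections $\{v_i:v\in V\}$; $\mathcal{I}_{\mathrm{all}}(V)=\{(i,[a,b]):[a,b]\in\mathcal{I}_i\}$ and $L_2(V)=\sum_{(i,[a,b])\in\mathcal{I}_{\mathrm{all}}(V)}(b-a)^2$. Let $\Delta(V)=\max_{x,y\in V}\|x-y\|_2^2$. A pair $x,y\in V$ is close if $\|x-y\|_2^2<\Delta(V)/k^4$. Let $R(V)\subseteq\mathcal{I}_{\mathrm{all}}(V)$ be the set of $(i,[a,b])$ such that $[a,b]\subseteq[\min(x_i,y_i),\max(x_i,y_i)]$ for some close pair $x,y\in V$, and $L_2'(V)=\sum_{(i,[a,b])\in\mathcal{I}_{\mathrm{all}}(V)\setminus R(V)}(b-a)^2$. *)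

theory Defs
  imports "HOL-Analysis.Analysis"
begin

text \<open>Points of R^d are vectors of type real^'d (coordinates x$i, i ranging over the
finite index type 'd). An interval [a,b] is represented by the pair (a,b).\<close>

definition proj :: "(real^'d) set \<Rightarrow> 'd \<Rightarrow> real set" where
  "proj V i = (\<lambda>v. v $ i) ` V"

definition intervals_all :: "(real^'d) set \<Rightarrow> ('d \<times> (real \<times> real)) set" where
  "intervals_all V = {(i, (a, b)) | i a b. a \<in> proj V i \<and> b \<in> proj V i \<and> a < b \<and>
      (\<forall>c\<in>proj V i. \<not> (a < c \<and> c < b))}"

definition L2 :: "(real^'d) set \<Rightarrow> real" where
  "L2 V = (\<Sum>(i, (a, b)) \<in> intervals_all V. (b - a)^2)"

definition Delta :: "(real^'d) set \<Rightarrow> real" where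
  "Delta V = Max {(norm (x - y))^2 | x y. x \<in> V \<and> y \<in> V}"

definition close_pair :: "nat \<Rightarrow> (real^'d) set \<Rightarrow> real^'d \<Rightarrow> real^'d \<Rightarrow> bool" where
  "close_pair k V x y \<longleftrightarrow> x \<in> V \<and> y \<in> V \<and> (norm (x - y))^2 < Delta V / (real k)^4"

definition removed :: "nat \<Rightarrow> (real^'d) set \<Rightarrow> ('d \<times> (real \<times> real)) set" where
  "removed k V = {(i, (a, b)) \<in> intervals_all V. \<exists>x y. close_pair k V x y \<and>
      min (x $ i) (y $ i) \<le> a \<and> b \<le> max (x $ i) (y $ i)}"

definition L2' :: "nat \<Rightarrow> (real^'d) set \<Rightarrow> real" where
  "L2' k V = (\<Sum>(i, (a, b)) \<in> intervals_all V - removed k V. (b - a)^2)"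

end

theory Submission
  imports Defs
begin

definition ivs :: "real set \<Rightarrow> (real \<times> real) set" where
  "ivs P = {(a, b). a \<in> P \<and> b \<in> P \<and> a < b \<and> (\<forall>c\<in>P. \<not> (a < c \<and> c < b))}"

lemma ivs_finite: "finite P \<Longrightarrow> finite (ivs P)"
  by (rule finite_subset[of _ "P \<times> P"]) (auto simp: ivs_def)

lemma ivs_lt: "(a,b) \<in> ivs P \<Longrightarrow> (a',b') \<in> ivs P \<Longrightarrow> a' < a \<Longrightarrow> b' \<le> a"
  unfolding ivs_def by force

lemma ivs_eq: "(a,b) \<in> ivs P \<Longrightarrow> (a,b') \<in> ivs P \<Longrightarrow> b = b'"
  unfolding ivs_def by (auto, meson linorder_neqE_linordered_idom)

lemma sq_sum_le:
  fixes S :: "(real \<times> real) set"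
  assumes "finite S" "\<forall>(a,b)\<in>S. u \<le> a \<and> a < b \<and> b \<le> w"
    "\<forall>(a,b)\<in>S. \<forall>(a',b')\<in>S. a' < a \<longrightarrow> b' \<le> a"
    "\<forall>(a,b)\<in>S. \<forall>(a',b')\<in>S. a = a' \<longrightarrow> b = b'"
  shows "(\<Sum>(a,b)\<in>S. (b-a)^2) \<le> (w-u)^2"
  using assms
proof (induction "card S" arbitrary: S w rule: less_induct)
  case less
  show ?case
  proof (cases "S = {}")
    case True thus ?thesis by simp
  next
    case False
    define a where "a = Max (fst ` S)"
    have "a \<in> fst ` S" unfolding a_def using False less.prems(1) by auto
    then obtain b where ab: "(a,b) \<in> S" by force
    have amax: "\<And>p. p \<in> S \<Longrightarrow> fst p \<le> a" unfolding a_def using less.prems(1) by auto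
    define S' where "S' = S - {(a,b)}"
    have S'lt: "\<And>a' b'. (a',b') \<in> S' \<Longrightarrow> a' < a"
    proof -
      fix a' b' assume h: "(a',b') \<in> S'"
      hence "a' \<le> a" using amax[of "(a',b')"] S'_def by auto
      moreover have "a' \<noteq> a" using h less.prems(4) ab S'_def by fastforce
      ultimately show "a' < a" by simp
    qed
    have IH: "(\<Sum>(a,b)\<in>S'. (b-a)^2) \<le> (a-u)^2"
    proof (rule less.hyps)
      show "card S' < card S" proof -
        have "card S > 0" using ab less.prems(1) by (auto simp: card_gt_0_iff)
        thus ?thesis unfolding S'_def using ab less.prems(1) by simp
      qed
      show "finite S'" using less.prems(1) S'_def by simp
      show "\<forall>(a1,b1)\<in>S'. u \<le> a1 \<and> a1 < b1 \<and> b1 \<le> a"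
      proof (clarify)
        fix a1 b1 assume h: "(a1,b1) \<in> S'"
        have "a1 < a" using S'lt h .
        hence "b1 \<le> a" using less.prems(3) ab h S'_def by fastforce
        thus "u \<le> a1 \<and> a1 < b1 \<and> b1 \<le> a" using less.prems(2) h S'_def by fastforce
      qed
      show "\<forall>(a,b)\<in>S'. \<forall>(a',b')\<in>S'. a' < a \<longrightarrow> b' \<le> a" using less.prems(3) S'_def by auto
      show "\<forall>(a,b)\<in>S'. \<forall>(a',b')\<in>S'. a = a' \<longrightarrow> b = b'" using less.prems(4) S'_def by auto
    qed
    have "(\<Sum>(a,b)\<in>S. (b-a)^2) = (b-a)^2 + (\<Sum>(a,b)\<in>S'. (b-a)^2)"
      unfolding S'_def using ab less.prems(1) by (simp add: sum.remove)
    also have "\<dots> \<le> (b-a)^2 + (a-u)^2" using IH by simp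
    also have "\<dots> \<le> (w-u)^2"
    proof -
      have "u \<le> a" "a < b" "b \<le> w" using less.prems(2) ab by auto
      hence "(b-a)^2 + (a-u)^2 \<le> (b-u)^2"
        using mult_nonneg_nonneg[of "b-a" "a-u"] by (simp add: power2_eq_square algebra_simps)
      also have "(b-u)^2 \<le> (w-u)^2" using \<open>u \<le> a\<close> \<open>a < b\<close> \<open>b \<le> w\<close> by (intro power_mono) auto
      finally show ?thesis .
    qed
    finally show ?thesis .
  qed
qed

definition wthn :: "real set \<Rightarrow> real \<Rightarrow> real \<Rightarrow> (real \<times> real) set" where
  "wthn P u w = {(a,b) \<in> ivs P. u \<le> a \<and> b \<le> w}"

lemma wthn_finite: "finite P \<Longrightarrow> finite (wthn P u w)"
  using ivs_finite[of P] unfolding wthn_def by (rule finite_subset[rotated]) auto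

lemma wthn_sq_le: "finite P \<Longrightarrow> (\<Sum>(a,b)\<in>wthn P u w. (b-a)^2) \<le> (w-u)^2"
proof (rule sq_sum_le)
  assume "finite P"
  thus "finite (wthn P u w)" by (rule wthn_finite)
  show "\<forall>(a,b)\<in>wthn P u w. u \<le> a \<and> a < b \<and> b \<le> w" by (auto simp: wthn_def ivs_def)
  show "\<forall>(a,b)\<in>wthn P u w. \<forall>(a',b')\<in>wthn P u w. a' < a \<longrightarrow> b' \<le> a"
    unfolding wthn_def by (clarsimp, metis ivs_lt)
  show "\<forall>(a,b)\<in>wthn P u w. \<forall>(a',b')\<in>wthn P u w. a = a' \<longrightarrow> b = b'"
    unfolding wthn_def by (clarsimp, metis ivs_eq)
qed

lemma wthn_len:
  assumes "finite P" "u \<in> P" "w \<in> P" "u \<le> w"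
  shows "(\<Sum>(a,b)\<in>wthn P u w. b-a) = w - u"
  using assms
proof (induction "card {c\<in>P. u < c \<and> c \<le> w}" arbitrary: u rule: less_induct)
  case less
  show ?case
  proof (cases "u = w")
    case True
    hence "wthn P u w = {}" by (auto simp: wthn_def ivs_def)
    thus ?thesis using True by simp
  next
    case False
    define C where "C = {c\<in>P. u < c \<and> c \<le> w}"
    have wC: "w \<in> C" using False less.prems C_def by auto
    have fC: "finite C" using less.prems(1) C_def by simp
    define c where "c = Min C"
    have cC: "c \<in> C" using wC fC c_def by (metis Min_in empty_iff)
    have cmin: "\<And>x. x \<in> C \<Longrightarrow> c \<le> x" using fC c_def by simp
    have uc: "(u,c) \<in> ivs P" using cC cmin less.prems unfolding ivs_def C_def by force
    have split: "wthn P u w = insert (u,c) (wthn P c w)"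
    proof (rule set_eqI, clarify)
      fix a b
      show "(a,b) \<in> wthn P u w \<longleftrightarrow> (a,b) \<in> insert (u,c) (wthn P c w)"
      proof
        assume h: "(a,b) \<in> wthn P u w"
        show "(a,b) \<in> insert (u,c) (wthn P c w)"
        proof (cases "a = u")
          case True
          have "b \<in> C" using h True unfolding wthn_def ivs_def C_def by auto
          hence "c \<le> b" using cmin by simp
          moreover have "\<not> (u < c \<and> c < b)" using h True cC unfolding wthn_def ivs_def C_def by auto
          ultimately have "b = c" using cC C_def by auto
          thus ?thesis using True by simp
        next
          case False
          hence "a \<in> C" using h unfolding wthn_def ivs_def C_def by auto
          hence "c \<le> a" using cmin by simp
          thus ?thesis using h unfolding wthn_def by auto
        qed
      next
        assume "(a,b) \<in> insert (u,c) (wthn P c w)"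
        thus "(a,b) \<in> wthn P u w" using uc cC C_def unfolding wthn_def by auto
      qed
    qed
    have notin: "(u,c) \<notin> wthn P c w" using cC C_def unfolding wthn_def by auto
    have fin: "finite (wthn P c w)"
      using ivs_finite[OF less.prems(1)] unfolding wthn_def by (rule finite_subset[rotated]) auto
    have "{d\<in>P. c < d \<and> d \<le> w} \<subset> C" using cC C_def by auto
    hence "card {d\<in>P. c < d \<and> d \<le> w} < card C" using fC by (simp add: psubset_card_mono)
    hence IH: "(\<Sum>(a,b)\<in>wthn P c w. b-a) = w - c"
      using less.hyps[of c] less.prems cC C_def by auto
    show ?thesis unfolding split using fin notin IH by simp
  qed
qed

lemma wthn_card:
  assumes "finite P" "w \<in> P"
  shows "card (wthn P u w) \<le> card P - 1"
proof -
  have "inj_on fst (wthn P u w)" using ivs_eq[of _ _ P] unfolding wthn_def inj_on_def by auto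
  moreover have "fst ` wthn P u w \<subseteq> P - {w}" unfolding wthn_def ivs_def by auto
  ultimately have "card (wthn P u w) \<le> card (P - {w})"
    using assms by (metis card_image card_mono finite_Diff)
  thus ?thesis using assms by simp
qed

lemma wthn_lower:
  assumes "finite P" "u \<in> P" "w \<in> P" "u \<le> w"
  shows "(w-u)^2 \<le> (real (card P) - 1) * (\<Sum>(a,b)\<in>ivs P. (b-a)^2)"
proof -
  let ?W = "wthn P u w"
  have fin: "finite ?W"
    using ivs_finite[OF assms(1)] unfolding wthn_def by (rule finite_subset[rotated]) auto
  have "(w-u)^2 = (\<Sum>p\<in>?W. (snd p - fst p) * 1)^2"
    using wthn_len[OF assms] by (simp add: case_prod_beta)
  also have "\<dots> \<le> (\<Sum>p\<in>?W. (snd p - fst p)^2) * (\<Sum>p\<in>?W. 1^2)"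
    by (rule Cauchy_Schwarz_ineq_sum)
  also have "\<dots> = (\<Sum>p\<in>?W. (snd p - fst p)^2) * real (card ?W)" by simp
  also have "\<dots> \<le> (\<Sum>p\<in>ivs P. (snd p - fst p)^2) * (real (card P) - 1)"
  proof (rule mult_mono)
    show "(\<Sum>p\<in>?W. (snd p - fst p)^2) \<le> (\<Sum>p\<in>ivs P. (snd p - fst p)^2)"
      by (rule sum_mono2[OF ivs_finite[OF assms(1)]]) (auto simp: wthn_def)
    have "card P \<ge> 1" using assms by (metis One_nat_def Suc_leI card_gt_0_iff empty_iff)
    thus "real (card ?W) \<le> real (card P) - 1" using wthn_card[OF assms(1,3), of u]
      by (metis of_nat_1 of_nat_diff of_nat_le_iff)
    show "0 \<le> (\<Sum>p\<in>ivs P. (snd p - fst p)^2)" by (simp add: sum_nonneg)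
  qed simp
  finally show ?thesis by (simp add: case_prod_beta mult.commute)
qed


lemma norm_sq_vec: "(norm (x::real^'d))^2 = (\<Sum>i\<in>UNIV. (x$i)^2)"
  by (simp add: norm_vec_def L2_set_def sum_nonneg)

lemma ia_Sigma: "intervals_all V = Sigma UNIV (\<lambda>i. ivs (proj V i))"
  unfolding intervals_all_def ivs_def by auto

lemma proj_finite: "finite V \<Longrightarrow> finite (proj V i)"
  unfolding proj_def by simp

lemma ia_finite: "finite V \<Longrightarrow> finite (intervals_all V)"
  unfolding ia_Sigma by (intro finite_SigmaI) (auto intro: ivs_finite proj_finite)

lemma L2_Sigma: "finite V \<Longrightarrow> L2 V = (\<Sum>i\<in>UNIV. \<Sum>(a,b)\<in>ivs (proj V i). (b-a)^2)"
  unfolding L2_def ia_Sigma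
  by (subst sum.Sigma) (auto intro: ivs_finite proj_finite)

lemma coord_bound:
  fixes x y :: "real^'d"
  assumes "finite V" "x \<in> V" "y \<in> V"
  shows "(x$i - y$i)^2 \<le> (real (card V) - 1) * (\<Sum>(a,b)\<in>ivs (proj V i). (b-a)^2)"
proof -
  let ?P = "proj V i"
  have f: "finite ?P" using assms proj_finite by auto
  have "(x$i - y$i)^2 = (max (x$i) (y$i) - min (x$i) (y$i))^2"
    by (cases "x$i \<le> y$i") (auto simp: power2_commute max_def min_def)
  also have "\<dots> \<le> (real (card ?P) - 1) * (\<Sum>(a,b)\<in>ivs ?P. (b-a)^2)"
    by (rule wthn_lower[OF f]) (auto simp: proj_def assms max_def min_def)
  also have "\<dots> \<le> (real (card V) - 1) * (\<Sum>(a,b)\<in>ivs ?P. (b-a)^2)"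
  proof (rule mult_right_mono)
    have "card ?P \<le> card V" unfolding proj_def by (rule card_image_le[OF assms(1)])
    thus "real (card ?P) - 1 \<le> real (card V) - 1" by simp
    show "0 \<le> (\<Sum>(a,b)\<in>ivs ?P. (b-a)^2)" by (simp add: sum_nonneg case_prod_beta)
  qed
  finally show ?thesis .
qed

lemma pair_bound:
  fixes x y :: "real^'d"
  assumes "finite V" "x \<in> V" "y \<in> V"
  shows "(norm (x - y))^2 \<le> (real (card V) - 1) * L2 V"
proof -
  have "(norm (x - y))^2 = (\<Sum>i\<in>UNIV. (x$i - y$i)^2)" by (simp add: norm_sq_vec)
  also have "\<dots> \<le> (\<Sum>i\<in>UNIV. (real (card V) - 1) * (\<Sum>(a,b)\<in>ivs (proj V i). (b-a)^2))"
    by (rule sum_mono) (rule coord_bound[OF assms])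
  also have "\<dots> = (real (card V) - 1) * L2 V"
    by (simp add: L2_Sigma[OF assms(1)] sum_distrib_left)
  finally show ?thesis .
qed

definition cover :: "real^'d \<Rightarrow> real^'d \<Rightarrow> 'd \<times> real \<times> real \<Rightarrow> bool" where
  "cover x y r = (min (x $ fst r) (y $ fst r) \<le> fst (snd r) \<and> snd (snd r) \<le> max (x $ fst r) (y $ fst r))"

definition fI :: "'d \<times> real \<times> real \<Rightarrow> real" where
  "fI r = (snd (snd r) - fst (snd r))^2"

lemma cover_bound:
  fixes x y :: "real^'d"
  assumes "finite V"
  shows "(\<Sum>r\<in>intervals_all V. if cover x y r then fI r else 0) \<le> (norm (x - y))^2"
proof -
  have "(\<Sum>r\<in>intervals_all V. if cover x y r then fI r else 0)
      = (\<Sum>i\<in>UNIV. \<Sum>p\<in>ivs (proj V i). if cover x y (i,p) then fI (i,p) else 0)"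
    unfolding ia_Sigma by (subst sum.Sigma) (auto intro: ivs_finite proj_finite assms)
  also have "\<dots> = (\<Sum>i\<in>UNIV. \<Sum>(a,b)\<in>wthn (proj V i) (min (x$i) (y$i)) (max (x$i) (y$i)). (b-a)^2)"
  proof (rule sum.cong[OF refl])
    fix i
    have "(\<Sum>(a,b)\<in>wthn (proj V i) (min (x$i) (y$i)) (max (x$i) (y$i)). (b-a)^2)
        = (\<Sum>p\<in>{p\<in>ivs (proj V i). cover x y (i,p)}. fI (i,p))"
      unfolding wthn_def cover_def fI_def by (intro sum.cong) (auto simp: case_prod_beta)
    also have "\<dots> = (\<Sum>p\<in>ivs (proj V i). if cover x y (i,p) then fI (i,p) else 0)"
      by (rule sum.inter_filter) (auto intro: ivs_finite proj_finite assms)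
    finally show "(\<Sum>p\<in>ivs (proj V i). if cover x y (i,p) then fI (i,p) else 0)
      = (\<Sum>(a,b)\<in>wthn (proj V i) (min (x$i) (y$i)) (max (x$i) (y$i)). (b-a)^2)" by simp
  qed
  also have "\<dots> \<le> (\<Sum>i\<in>UNIV. (max (x$i) (y$i) - min (x$i) (y$i))^2)"
    by (rule sum_mono) (rule wthn_sq_le, auto intro: proj_finite assms)
  also have "\<dots> = (\<Sum>i\<in>UNIV. (x$i - y$i)^2)"
    by (rule sum.cong[OF refl]) (auto simp: max_def min_def power2_commute)
  also have "\<dots> = (norm (x - y))^2" by (simp add: norm_sq_vec)
  finally show ?thesis .
qed


theorem proposition4p4:
  fixes U V :: "(real^'d) set" and k :: nat
  assumes "k \<ge> 2" and "finite U" and "card U = k" and "V \<subseteq> U" and "card V \<ge> 2"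
  shows "L2' k V \<ge> L2 V / 2"
proof -
  have fV: "finite V" using assms finite_subset by blast
  have mk: "card V \<le> k" using assms card_mono by blast
  define D where "D = {(norm (x - y))^2 | x y. x \<in> V \<and> y \<in> V}"
  have D_img: "D = (\<lambda>(x,y). (norm (x - y))^2) ` (V \<times> V)" unfolding D_def by auto
  have fD: "finite D" unfolding D_img using fV by simp
  have Vne: "V \<noteq> {}" using assms by auto
  have Dne: "D \<noteq> {}" unfolding D_img using Vne by simp
  have DeltaD: "Delta V = Max D" unfolding Delta_def D_def by simp
  have "Delta V \<in> D" unfolding DeltaD using fD Dne by simp
  then obtain x0 y0 where xy0: "x0 \<in> V" "y0 \<in> V" "Delta V = (norm (x0 - y0))^2"
    unfolding D_def by auto
  have L2nn: "0 \<le> L2 V" unfolding L2_def by (simp add: sum_nonneg case_prod_beta)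
  have low: "Delta V \<le> (real k - 1) * L2 V"
  proof -
    have "Delta V \<le> (real (card V) - 1) * L2 V" using pair_bound[OF fV xy0(1,2)] xy0(3) by simp
    also have "\<dots> \<le> (real k - 1) * L2 V" using mk L2nn by (intro mult_right_mono) auto
    finally show ?thesis .
  qed
  define C where "C = {c \<in> V \<times> V. close_pair k V (fst c) (snd c)}"
  have fC: "finite C" unfolding C_def using fV by simp
  have cardC: "card C \<le> k^2"
  proof -
    have "card C \<le> card (V \<times> V)" unfolding C_def using fV by (intro card_mono) auto
    also have "\<dots> = card V ^ 2" by (simp add: card_cartesian_product power2_eq_square)
    also have "\<dots> \<le> k^2" using mk by (simp add: power_mono)
    finally show ?thesis .
  qed
  let ?R = "removed k V"
  have Rsub: "?R \<subseteq> intervals_all V" unfolding removed_def by auto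
  have fIA: "finite (intervals_all V)" by (rule ia_finite[OF fV])
  have fR: "finite ?R" using Rsub fIA finite_subset by blast
  have fInn: "\<And>r. 0 \<le> fI r" unfolding fI_def by simp
  have "(\<Sum>r\<in>?R. fI r) \<le> (\<Sum>r\<in>?R. \<Sum>c\<in>C. if cover (fst c) (snd c) r then fI r else 0)"
  proof (rule sum_mono)
    fix r assume r: "r \<in> ?R"
    obtain i a b where rr: "r = (i,(a,b))" by (metis prod.collapse)
    from r obtain x y where cp: "close_pair k V x y" "min (x $ i) (y $ i) \<le> a" "b \<le> max (x $ i) (y $ i)"
      unfolding removed_def rr by auto
    have cC: "(x,y) \<in> C" unfolding C_def using cp close_pair_def by auto
    have cov: "cover x y r" unfolding cover_def rr using cp by simp
    have "fI r = (if cover (fst (x,y)) (snd (x,y)) r then fI r else 0)" using cov by simp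
    also have "\<dots> \<le> (\<Sum>c\<in>C. if cover (fst c) (snd c) r then fI r else 0)"
      by (rule member_le_sum[OF cC]) (auto simp: fInn fC)
    finally show "fI r \<le> (\<Sum>c\<in>C. if cover (fst c) (snd c) r then fI r else 0)" .
  qed
  also have "\<dots> = (\<Sum>c\<in>C. \<Sum>r\<in>?R. if cover (fst c) (snd c) r then fI r else 0)"
    by (rule sum.swap)
  also have "\<dots> \<le> (\<Sum>c\<in>C. \<Sum>r\<in>intervals_all V. if cover (fst c) (snd c) r then fI r else 0)"
    by (intro sum_mono sum_mono2[OF fIA Rsub]) (auto simp: fInn)
  also have "\<dots> \<le> (\<Sum>c\<in>C. (norm (fst c - snd c))^2)"
    by (intro sum_mono cover_bound[OF fV])
  also have "\<dots> \<le> (\<Sum>c\<in>C. Delta V / (real k)^4)"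
    by (intro sum_mono) (auto simp: C_def close_pair_def less_imp_le)
  also have "\<dots> = real (card C) * (Delta V / (real k)^4)" by simp
  finally have Rb: "(\<Sum>r\<in>?R. fI r) \<le> real (card C) * (Delta V / (real k)^4)" .
  have Dnn: "0 \<le> Delta V" using xy0 by simp
  have kpos: "(0::real) < real k" using assms by simp
  have "real (card C) * (Delta V / (real k)^4) \<le> (real k)^2 * (Delta V / (real k)^4)"
    using cardC Dnn by (intro mult_right_mono) (auto simp: of_nat_power[symmetric] simp del: of_nat_power)
  also have "\<dots> = Delta V / (real k)^2" using kpos by (simp add: field_simps eval_nat_numeral)
  also have "\<dots> \<le> (real k - 1) * L2 V / (real k)^2" using low kpos by (simp add: divide_right_mono)
  also have "\<dots> \<le> L2 V / 2"
  proof -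
    have "2 * (real k - 1) \<le> (real k)^2" 
    proof -
      have "0 \<le> (real k - 1)^2" by simp
      thus ?thesis by (simp add: power2_eq_square algebra_simps)
    qed
    hence "2 * ((real k - 1) * L2 V) \<le> (real k)^2 * L2 V" using L2nn
      by (metis mult.assoc mult_right_mono)
    thus ?thesis using kpos by (simp add: field_simps)
  qed
  finally have RL: "(\<Sum>r\<in>?R. fI r) \<le> L2 V / 2" using Rb by linarith
  have "L2 V = (\<Sum>r\<in>intervals_all V. fI r)" unfolding L2_def fI_def by (simp add: case_prod_beta)
  moreover have "L2' k V = (\<Sum>r\<in>intervals_all V - ?R. fI r)" unfolding L2'_def fI_def by (simp add: case_prod_beta)
  moreover have "(\<Sum>r\<in>intervals_all V - ?R. fI r) = (\<Sum>r\<in>intervals_all V. fI r) - (\<Sum>r\<in>?R. fI r)"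
    using sum_diff[OF fIA Rsub] .
  ultimately show ?thesis using RL by simp
qed

end
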